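(* Let $K\subseteq\mathbb R^{|\mathcal A|\times|\mathcal X|}$ be a convex cone of entrywise nonnegative vectors $\tilde p$ for which $\operatorname{tr}[\tilde p]:=\sum_{a}\tilde p(a\mid x)$ is independent of $x$, and such that $K\supseteq\{q\,p:q\ge0,\ p\in\mathcal Q\}$. For $\mathbf y\in\mathbf f[\mathcal Q]$ define $$G(\mathbf y)=\sup\Big\{\sum_{a\in\mathcal A,x\in\mathcal X_r}\tilde p_{a,x}(a\mid x)\ :\ \tilde p_{a,x}\in K,\ \sum_{a\in\mathcal A,x\in\mathcal X_r}\operatorname{tr}[\tilde p_{a,x}]=1,\ \sum_{a\in\mathcal A,x\in\mathcal X_r}\mathbf f[\tilde p_{a,x}]=\mathbf y\Big\}.$$ Then $H(\mathbf y):=-\log_2G(\mathbf y)$ is a randomness-bounding function for $\mathcal X_r$. Moreover, for $\hat{\mathbf f}^-\le\hat{\mathbf f}^+$ in $(\mathbb R\cup\{\pm\infty\})^t$, defining $G([\hat{\mathbf f}^-,\hat{\mathbf f}^+])$ by the same supremum with the equality constraint replaced by $\hat{\mathbf f}^-\le\sum_{a,x}\mathbf f[\tilde p_{a,x}]\le\hat{\mathbf f}^+$ (componentwise), and setting $G=1$ when this problem is infeasible, the number $-\log_2G([\hat{\mathbf f}^-,\hat{\mathbf f}^+])$ is at most $\inf\{H(\mathbf y):\mathbf y\in\mathbf f[\mathcal Q]\cap[\hat{\mathbf f}^-,\hat{\mathbf f}^+]\}$.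
   Context: Setting. A Bell device consists of $k$ boxes with finite input sets $\mathcal X_i$ and output sets $\mathcal A_i$; $\mathcal X=\prod_i\mathcal X_i$, $\mathcal A=\prod_i\mathcal A_i$. Single-round behaviors $p=(p(a\mid x))_{a\in\mathcal A,x\in\mathcal X}$; $\mathcal Q$ the (convex) set of quantum behaviors, realizable by a $k$-partite quantum state and local measurements. Bell expression $f\in\mathbb R^{|\mathcal A|\times|\mathcal X|}$ acts linearly on any vector $\tilde p$ via $f[\tilde p]=\sum_{a,x}f(a,x)\tilde p(a\mid x)$; fixed $\mathbf f=(f_1,\dots,f_t)$, $\mathbf f[\tilde p]=(f_1[\tilde p],\dots,f_t[\tilde p])$, $\mathbf f[\mathcal Q]=\{\mathbf f[p]:p\in\mathcal Q\}$. Examples of admissible $K$: the cone of unnormalized quantum behaviors or any of its NPA (semidefinite) outer relaxations. RB function: for a nonempty $\mathcal X_r\subseteq\mathcal X$, a function $H:\mathbf f[\mathcal Q]\to[0,\log_2|\mathcal A|]$ such that (1) $\min_{a\in\mathcal A,x\in\mathcal X_r}(-\log_2p(a\mid x))\ge H(\mathbf f[p])$ for all $p\in\mathcal Q$, and (2) $H(q\mathbf f[p_1]+(1-q)\mathbf f[p_2])\le qH(\mathbf f[p_1])+(1-q)H(\mathbf f[p_2])$ for all $q\in[0,1]$, $p_1,p_2\in\mathcal Q$. *)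

theory Defs
  imports "HOL-Analysis.Analysis"
begin

text \<open>Behaviours (and unnormalized behaviours) are vectors in R^(A x X),
  indexed by pairs (a, x); the entry p $ (a, x) stands for p(a|x).
  A Bell expression f is a vector of the same space, and f[p] = f \<bullet> p.\<close>

type_synonym ('a, 'x) bvec = "real ^ ('a \<times> 'x)"

definition bell :: "('a::finite, 'x::finite) bvec \<Rightarrow> ('a, 'x) bvec \<Rightarrow> real" where
  "bell f p = (\<Sum>a\<in>UNIV. \<Sum>x\<in>UNIV. f $ (a, x) * p $ (a, x))"

definition bellv :: "(('a::finite, 'x::finite) bvec) ^ 'i \<Rightarrow> ('a, 'x) bvec \<Rightarrow> real ^ 'i" where
  "bellv F p = (\<chi> i. bell (F $ i) p)"

definition behavior :: "('a::finite, 'x::finite) bvec \<Rightarrow> bool" where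
  "behavior p \<longleftrightarrow> (\<forall>a x. 0 \<le> p $ (a, x)) \<and> (\<forall>x. (\<Sum>a\<in>UNIV. p $ (a, x)) = 1)"

text \<open>tr[p] := sum_a p(a|x); for elements of the admissible cones it does not depend on x,
  so we evaluate it at an arbitrary fixed input.\<close>
definition tr :: "('a::finite, 'x::finite) bvec \<Rightarrow> real" where
  "tr p = (\<Sum>a\<in>UNIV. p $ (a, SOME x. True))"

definition admissible_cone :: "('a::finite, 'x::finite) bvec set \<Rightarrow> ('a, 'x) bvec set \<Rightarrow> bool" where
  "admissible_cone Q K \<longleftrightarrow> convex_cone K
     \<and> (\<forall>p\<in>K. \<forall>a x. 0 \<le> p $ (a, x))
     \<and> (\<forall>p\<in>K. \<forall>x x'. (\<Sum>a\<in>UNIV. p $ (a, x)) = (\<Sum>a\<in>UNIV. p $ (a, x')))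
     \<and> {q *\<^sub>R p | q p. q \<ge> 0 \<and> p \<in> Q} \<subseteq> K"

definition feas_vals :: "('a::finite, 'x::finite) bvec set \<Rightarrow> 'x set \<Rightarrow> (('a, 'x) bvec) ^ 'i
     \<Rightarrow> (real ^ 'i \<Rightarrow> bool) \<Rightarrow> real set" where
  "feas_vals K Xr F S = {(\<Sum>a\<in>UNIV. \<Sum>x\<in>Xr. P a x $ (a, x)) | P.
       (\<forall>a. \<forall>x\<in>Xr. P a x \<in> K)
     \<and> (\<Sum>a\<in>UNIV. \<Sum>x\<in>Xr. tr (P a x)) = 1
     \<and> S (\<Sum>a\<in>UNIV. \<Sum>x\<in>Xr. bellv F (P a x))}"

definition Gfun :: "('a::finite, 'x::finite) bvec set \<Rightarrow> 'x set \<Rightarrow> (('a, 'x) bvec) ^ 'i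
     \<Rightarrow> real ^ 'i \<Rightarrow> real" where
  "Gfun K Xr F y = Sup (feas_vals K Xr F (\<lambda>z. z = y))"

definition Gbox :: "('a::finite, 'x::finite) bvec set \<Rightarrow> 'x set \<Rightarrow> (('a, 'x) bvec) ^ 'i
     \<Rightarrow> ('i \<Rightarrow> ereal) \<Rightarrow> ('i \<Rightarrow> ereal) \<Rightarrow> real" where
  "Gbox K Xr F lo hi =
     (let V = feas_vals K Xr F (\<lambda>z. \<forall>i. lo i \<le> ereal (z $ i) \<and> ereal (z $ i) \<le> hi i)
      in if V = {} then 1 else Sup V)"

text \<open>Randomness-bounding function H on f[Q] for the input set Xr.
  Condition (1) uses the convention -log2 0 = +infinity, so entries p(a|x) = 0 impose no constraint.\<close>
definition rb_function :: "('a::finite, 'x::finite) bvec set \<Rightarrow> (('a, 'x) bvec) ^ 'i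
     \<Rightarrow> 'x set \<Rightarrow> (real ^ 'i \<Rightarrow> real) \<Rightarrow> bool" where
  "rb_function Q F Xr H \<longleftrightarrow>
     Xr \<noteq> {}
   \<and> (\<forall>p\<in>Q. 0 \<le> H (bellv F p) \<and> H (bellv F p) \<le> log 2 (real CARD('a)))
   \<and> (\<forall>p\<in>Q. \<forall>a. \<forall>x\<in>Xr. 0 < p $ (a, x) \<longrightarrow> H (bellv F p) \<le> - log 2 (p $ (a, x)))
   \<and> (\<forall>q\<in>{0..1}. \<forall>p1\<in>Q. \<forall>p2\<in>Q.
        H (q *\<^sub>R bellv F p1 + (1 - q) *\<^sub>R bellv F p2)
          \<le> q * H (bellv F p1) + (1 - q) * H (bellv F p2))"

end

theory Submission
  imports Defs
begin

lemma sum_delta2: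
  fixes h :: "'a::finite \<Rightarrow> 'x \<Rightarrow> 'b::comm_monoid_add"
  assumes "x0 \<in> Xr" "finite Xr"
  shows "(\<Sum>a\<in>UNIV. \<Sum>x\<in>Xr. if a = a0 \<and> x = x0 then h a x else 0) = h a0 x0"
proof -
  have "(\<Sum>a\<in>UNIV. \<Sum>x\<in>Xr. if a = a0 \<and> x = x0 then h a x else 0)
      = (\<Sum>a\<in>UNIV. if a = a0 then (\<Sum>x\<in>Xr. if x = x0 then h a x else 0) else 0)"
    by (intro sum.cong) auto
  also have "\<dots> = h a0 x0" using assms by simp
  finally show ?thesis .
qed

lemma tr_lin: "tr (u *\<^sub>R p + v *\<^sub>R q) = u * tr p + v * tr q"
  unfolding tr_def by (simp add: sum.distrib sum_distrib_left)

lemma tr_zero: "tr 0 = 0" unfolding tr_def by simp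

lemma bellv_lin: "bellv F (u *\<^sub>R p + v *\<^sub>R q) = u *\<^sub>R bellv F p + v *\<^sub>R bellv F q"
  unfolding bellv_def bell_def
  by (simp add: vec_eq_iff sum.distrib sum_distrib_left algebra_simps)

lemma bellv_zero: "bellv F 0 = 0"
  unfolding bellv_def bell_def by (simp add: vec_eq_iff)

lemma bellv_scale: "bellv F (u *\<^sub>R p) = u *\<^sub>R bellv F p"
  using bellv_lin[of F u p 0 0] by (simp add: bellv_zero)

lemma tr_scale: "tr (u *\<^sub>R p) = u * tr p"
  using tr_lin[of u p 0 0] by (simp add: tr_zero)

lemma feas_le1:
  assumes K: "admissible_cone Q K" and v: "v \<in> feas_vals K Xr F S"
  shows "v \<le> 1"
proof -
  from v obtain P where vP: "v = (\<Sum>a\<in>UNIV. \<Sum>x\<in>Xr. P a x $ (a, x))"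
    and PK: "\<forall>a. \<forall>x\<in>Xr. P a x \<in> K" and tr1: "(\<Sum>a\<in>UNIV. \<Sum>x\<in>Xr. tr (P a x)) = 1"
    unfolding feas_vals_def by blast
  have nn: "\<And>p a x. p \<in> K \<Longrightarrow> 0 \<le> p $ (a, x)"
    and ind: "\<And>p x x'. p \<in> K \<Longrightarrow> (\<Sum>a\<in>UNIV. p $ (a, x)) = (\<Sum>a\<in>UNIV. p $ (a, x'))"
    using K unfolding admissible_cone_def by blast+
  have "\<And>a x. x \<in> Xr \<Longrightarrow> P a x $ (a, x) \<le> tr (P a x)"
  proof -
    fix a x assume x: "x \<in> Xr"
    have "P a x $ (a, x) \<le> (\<Sum>a'\<in>UNIV. P a x $ (a', x))"
      by (rule member_le_sum[where f="\<lambda>a'. P a x $ (a', x)"]) (use nn PK x in auto)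
    also have "\<dots> = tr (P a x)" unfolding tr_def using ind PK x by blast
    finally show "P a x $ (a, x) \<le> tr (P a x)" .
  qed
  hence "v \<le> (\<Sum>a\<in>UNIV. \<Sum>x\<in>Xr. tr (P a x))" unfolding vP
    by (intro sum_mono) auto
  with tr1 show ?thesis by simp
qed

lemma feas_bdd: "admissible_cone Q K \<Longrightarrow> bdd_above (feas_vals K Xr F S)"
  using feas_le1 by (meson bdd_above.I)

lemma sup_comb:
  fixes A B :: "real set"
  assumes "0 \<le> q" "q \<le> 1" "A \<noteq> {}" "B \<noteq> {}" "bdd_above A" "bdd_above B"
    and H: "\<forall>a\<in>A. \<forall>b\<in>B. q*a + (1-q)*b \<le> S"
  shows "q * Sup A + (1-q) * Sup B \<le> S"
proof (cases "q = 0")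
  case True
  obtain a where "a \<in> A" using assms by auto
  hence "\<forall>b\<in>B. b \<le> S" using H True by auto
  hence "Sup B \<le> S" using assms by (intro cSup_least) auto
  thus ?thesis using True by simp
next
  case q0: False
  show ?thesis
  proof (cases "q = 1")
    case True
    obtain b where "b \<in> B" using assms by auto
    hence "\<forall>a\<in>A. a \<le> S" using H True by auto
    hence "Sup A \<le> S" using assms by (intro cSup_least) auto
    thus ?thesis using True by simp
  next
    case False
    have qp: "0 < q" "0 < 1 - q" using q0 False assms by auto
    have "\<forall>b\<in>B. Sup A \<le> (S - (1-q)*b)/q"
    proof
      fix b assume b: "b \<in> B"
      show "Sup A \<le> (S - (1-q)*b)/q"
      proof (rule cSup_least)
        show "A \<noteq> {}" by fact
        fix a assume "a \<in> A"
        with H b have "q*a + (1-q)*b \<le> S" by auto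
        thus "a \<le> (S - (1-q)*b)/q" using qp by (simp add: field_simps)
      qed
    qed
    hence "\<forall>b\<in>B. b \<le> (S - q * Sup A)/(1-q)" using qp by (auto simp: field_simps)
    hence "Sup B \<le> (S - q * Sup A)/(1-q)" using assms by (intro cSup_least) auto
    thus ?thesis using qp by (simp add: field_simps)
  qed
qed

lemma feas_intro:
  assumes "\<forall>a. \<forall>x\<in>Xr. P a x \<in> K" "(\<Sum>a\<in>UNIV. \<Sum>x\<in>Xr. tr (P a x)) = 1"
    "S (\<Sum>a\<in>UNIV. \<Sum>x\<in>Xr. bellv F (P a x))" "v = (\<Sum>a\<in>UNIV. \<Sum>x\<in>Xr. P a x $ (a, x))"
  shows "v \<in> feas_vals K Xr F S"
  unfolding feas_vals_def using assms by blast

theorem mainTheorem5: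
  fixes Q K :: "('a::finite, 'x::finite) bvec set"
    and F :: "(('a, 'x) bvec) ^ ('i::finite)"
    and Xr :: "'x set"
  assumes Qbeh: "\<forall>p\<in>Q. behavior p"
    and Qconv: "convex Q"
    and Kadm: "admissible_cone Q K"
    and Xr: "Xr \<noteq> {}"
  shows "rb_function Q F Xr (\<lambda>y. - log 2 (Gfun K Xr F y))
       \<and> (\<forall>lo hi :: 'i \<Rightarrow> ereal. (\<forall>i. lo i \<le> hi i) \<longrightarrow>
            ereal (- log 2 (Gbox K Xr F lo hi))
              \<le> (INF y \<in> {bellv F p | p. p \<in> Q} \<inter> {y. \<forall>i. lo i \<le> ereal (y $ i) \<and> ereal (y $ i) \<le> hi i}.
                   ereal (- log 2 (Gfun K Xr F y))))"
proof -
  have KK: "convex_cone K" and QK: "\<And>p c. p \<in> Q \<Longrightarrow> 0 \<le> c \<Longrightarrow> c *\<^sub>R p \<in> K"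
    using Kadm unfolding admissible_cone_def by blast+
  have K0: "0 \<in> K" using KK convex_cone_contains_0 by blast
  have finXr: "finite Xr" by simp
  obtain x0 where x0: "x0 \<in> Xr" using Xr by auto
  define n where "n = real CARD('a)"
  have npos: "0 < n" unfolding n_def by simp
  have trQ: "\<And>p. p \<in> Q \<Longrightarrow> tr p = 1" using Qbeh unfolding behavior_def tr_def by blast
  have nnQ: "\<And>p a x. p \<in> Q \<Longrightarrow> 0 \<le> p $ (a, x)" using Qbeh unfolding behavior_def by blast
  have sumQ: "\<And>p x. p \<in> Q \<Longrightarrow> (\<Sum>a\<in>UNIV. p $ (a, x)) = 1" using Qbeh unfolding behavior_def by blast
  have bdd: "\<And>S. bdd_above (feas_vals K Xr F S)" using feas_bdd[OF Kadm] .
  have single: "p $ (a0, x0') \<in> feas_vals K Xr F (\<lambda>z. z = bellv F p)"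
    if p: "p \<in> Q" and x0': "x0' \<in> Xr" for p a0 x0'
  proof (rule feas_intro[where P="\<lambda>a x. if a = a0 \<and> x = x0' then p else 0"])
    have pK: "p \<in> K" using QK[OF p, of 1] by simp
    show "\<forall>a. \<forall>x\<in>Xr. (if a = a0 \<and> x = x0' then p else 0) \<in> K" using pK K0 by auto
    have "(\<Sum>a\<in>UNIV. \<Sum>x\<in>Xr. tr (if a = a0 \<and> x = x0' then p else 0))
        = (\<Sum>a\<in>UNIV. \<Sum>x\<in>Xr. if a = a0 \<and> x = x0' then tr p else 0)"
      by (intro sum.cong) (auto simp: tr_zero)
    also have "\<dots> = 1" using sum_delta2[OF x0' finXr, of a0 "\<lambda>a x. tr p"] trQ[OF p] by simp
    finally show "(\<Sum>a\<in>UNIV. \<Sum>x\<in>Xr. tr (if a = a0 \<and> x = x0' then p else 0)) = 1" .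
    have "(\<Sum>a\<in>UNIV. \<Sum>x\<in>Xr. bellv F (if a = a0 \<and> x = x0' then p else 0))
        = (\<Sum>a\<in>UNIV. \<Sum>x\<in>Xr. if a = a0 \<and> x = x0' then bellv F p else 0)"
      by (intro sum.cong) (auto simp: bellv_zero)
    also have "\<dots> = bellv F p" using sum_delta2[OF x0' finXr, of a0 "\<lambda>a x. bellv F p"] by simp
    finally show "(\<Sum>a\<in>UNIV. \<Sum>x\<in>Xr. bellv F (if a = a0 \<and> x = x0' then p else 0)) = bellv F p" .
    have "(\<Sum>a\<in>UNIV. \<Sum>x\<in>Xr. (if a = a0 \<and> x = x0' then p else 0) $ (a, x))
        = (\<Sum>a\<in>UNIV. \<Sum>x\<in>Xr. if a = a0 \<and> x = x0' then p $ (a, x) else 0)"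
      by (intro sum.cong) auto
    also have "\<dots> = p $ (a0, x0')" using sum_delta2[OF x0' finXr, of a0 "\<lambda>a x. p $ (a, x)"] by simp
    finally show "p $ (a0, x0') = (\<Sum>a\<in>UNIV. \<Sum>x\<in>Xr. (if a = a0 \<and> x = x0' then p else 0) $ (a, x))" by simp
  qed
  have unif: "1 / n \<in> feas_vals K Xr F (\<lambda>z. z = bellv F p)" if p: "p \<in> Q" for p
  proof (rule feas_intro[where P="\<lambda>a x. if x = x0 then (1/n) *\<^sub>R p else 0"])
    show "\<forall>a. \<forall>x\<in>Xr. (if x = x0 then (1/n) *\<^sub>R p else 0) \<in> K" using QK[OF p, of "1/n"] npos K0 by auto
    have "(\<Sum>a::'a\<in>UNIV. \<Sum>x\<in>Xr. tr (if x = x0 then (1/n) *\<^sub>R p else 0))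
        = (\<Sum>a::'a\<in>UNIV. \<Sum>x\<in>Xr. if x = x0 then 1/n else 0)"
      by (rule sum.cong[OF refl], rule sum.cong[OF refl]) (auto simp: tr_zero tr_scale trQ[OF p])
    also have "\<dots> = 1" using x0 npos by (simp add: n_def)
    finally show "(\<Sum>a::'a\<in>UNIV. \<Sum>x\<in>Xr. tr (if x = x0 then (1/n) *\<^sub>R p else 0)) = 1" .
    have "(\<Sum>a::'a\<in>UNIV. \<Sum>x\<in>Xr. bellv F (if x = x0 then (1/n) *\<^sub>R p else 0))
        = (\<Sum>a::'a\<in>UNIV. \<Sum>x\<in>Xr. if x = x0 then (1/n) *\<^sub>R bellv F p else 0)"
      by (intro sum.cong) (auto simp: bellv_zero bellv_scale)
    also have "\<dots> = (\<Sum>a::'a\<in>UNIV. (1/n) *\<^sub>R bellv F p)" using x0 by simp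
    also have "\<dots> = (real CARD('a) * (1/n)) *\<^sub>R bellv F p" by (simp only: sum_constant_scaleR scaleR_scaleR card_UNIV_unit)
    also have "\<dots> = bellv F p" using npos by (simp add: n_def)
    finally show "(\<Sum>a::'a\<in>UNIV. \<Sum>x\<in>Xr. bellv F (if x = x0 then (1/n) *\<^sub>R p else 0)) = bellv F p" .
    have "(\<Sum>a::'a\<in>UNIV. \<Sum>x\<in>Xr. (if x = x0 then (1/n) *\<^sub>R p else 0) $ (a, x))
        = (\<Sum>a::'a\<in>UNIV. \<Sum>x\<in>Xr. if x = x0 then (1/n) * p $ (a, x) else 0)"
      by (intro sum.cong) auto
    also have "\<dots> = (\<Sum>a::'a\<in>UNIV. (1/n) * p $ (a, x0))" using x0 by simp
    also have "\<dots> = 1/n" by (simp only: sum_distrib_left[symmetric] sumQ[OF p] mult_1_right)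
    finally show "1/n = (\<Sum>a::'a\<in>UNIV. \<Sum>x\<in>Xr. (if x = x0 then (1/n) *\<^sub>R p else 0) $ (a, x))" by simp
  qed
  have Gprops: "1/n \<le> Gfun K Xr F (bellv F p) \<and> Gfun K Xr F (bellv F p) \<le> 1
      \<and> (\<forall>a. \<forall>x\<in>Xr. p $ (a, x) \<le> Gfun K Xr F (bellv F p))" if p: "p \<in> Q" for p
  proof -
    have ne: "feas_vals K Xr F (\<lambda>z. z = bellv F p) \<noteq> {}" using unif[OF p] by blast
    show ?thesis unfolding Gfun_def
      using cSup_upper[OF unif[OF p] bdd] cSup_upper[OF single[OF p] bdd]
        cSup_least[OF ne] feas_le1[OF Kadm] by blast
  qed
  have mix: "q * v1 + (1-q) * v2 \<in> feas_vals K Xr F (\<lambda>z. z = q *\<^sub>R y1 + (1-q) *\<^sub>R y2)"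
    if q: "0 \<le> q" "q \<le> 1" and v1: "v1 \<in> feas_vals K Xr F (\<lambda>z. z = y1)"
      and v2: "v2 \<in> feas_vals K Xr F (\<lambda>z. z = y2)" for q v1 v2 y1 y2
  proof -
    from v1 obtain P1 where vP1: "v1 = (\<Sum>a\<in>UNIV. \<Sum>x\<in>Xr. P1 a x $ (a, x))"
      and PK1: "\<forall>a. \<forall>x\<in>Xr. P1 a x \<in> K" and tr1: "(\<Sum>a\<in>UNIV. \<Sum>x\<in>Xr. tr (P1 a x)) = 1"
      and b1: "(\<Sum>a\<in>UNIV. \<Sum>x\<in>Xr. bellv F (P1 a x)) = y1"
      unfolding feas_vals_def by blast
    from v2 obtain P2 where vP2: "v2 = (\<Sum>a\<in>UNIV. \<Sum>x\<in>Xr. P2 a x $ (a, x))"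
      and PK2: "\<forall>a. \<forall>x\<in>Xr. P2 a x \<in> K" and tr2: "(\<Sum>a\<in>UNIV. \<Sum>x\<in>Xr. tr (P2 a x)) = 1"
      and b2: "(\<Sum>a\<in>UNIV. \<Sum>x\<in>Xr. bellv F (P2 a x)) = y2"
      unfolding feas_vals_def by blast
    show ?thesis
    proof (rule feas_intro[where P="\<lambda>a x. q *\<^sub>R P1 a x + (1-q) *\<^sub>R P2 a x"])
      show "\<forall>a. \<forall>x\<in>Xr. q *\<^sub>R P1 a x + (1-q) *\<^sub>R P2 a x \<in> K"
        using PK1 PK2 q KK by (auto intro!: convex_cone_add convex_cone_scaleR)
      show "(\<Sum>a\<in>UNIV. \<Sum>x\<in>Xr. tr (q *\<^sub>R P1 a x + (1-q) *\<^sub>R P2 a x)) = 1"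
        using tr1 tr2 by (simp add: tr_lin sum.distrib sum_distrib_left[symmetric])
      show "(\<Sum>a\<in>UNIV. \<Sum>x\<in>Xr. bellv F (q *\<^sub>R P1 a x + (1-q) *\<^sub>R P2 a x)) = q *\<^sub>R y1 + (1-q) *\<^sub>R y2"
        using b1 b2 by (simp add: bellv_lin sum.distrib scaleR_sum_right[symmetric])
      show "q * v1 + (1-q) * v2 = (\<Sum>a\<in>UNIV. \<Sum>x\<in>Xr. (q *\<^sub>R P1 a x + (1-q) *\<^sub>R P2 a x) $ (a, x))"
        unfolding vP1 vP2 by (simp add: sum.distrib sum_distrib_left)
    qed
  qed
  have part1: "rb_function Q F Xr (\<lambda>y. - log 2 (Gfun K Xr F y))"
    unfolding rb_function_def
  proof (intro conjI ballI allI impI)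
    show "Xr \<noteq> {}" by fact
  next
    fix p assume p: "p \<in> Q"
    from Gprops[OF p] npos have G0: "0 < Gfun K Xr F (bellv F p)" and G1: "Gfun K Xr F (bellv F p) \<le> 1"
      and Gn: "1/n \<le> Gfun K Xr F (bellv F p)"
      by (auto intro: less_le_trans[of 0 "1/n"])
    show "0 \<le> - log 2 (Gfun K Xr F (bellv F p))" using G0 G1 by simp
    have "log 2 (1/n) \<le> log 2 (Gfun K Xr F (bellv F p))" using Gn npos G0 by (subst log_le_cancel_iff) auto
    thus "- log 2 (Gfun K Xr F (bellv F p)) \<le> log 2 (real CARD('a))"
      using npos by (simp add: n_def log_divide)
  next
    fix p a x assume p: "p \<in> Q" and x: "x \<in> Xr" and pos: "0 < p $ (a, x)"
    have "p $ (a, x) \<le> Gfun K Xr F (bellv F p)" using Gprops[OF p] x by blast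
    thus "- log 2 (Gfun K Xr F (bellv F p)) \<le> - log 2 (p $ (a, x))" using pos by simp
  next
    fix q :: real and p1 p2 assume q: "q \<in> {0..1}" and p1: "p1 \<in> Q" and p2: "p2 \<in> Q"
    let ?y1 = "bellv F p1" and ?y2 = "bellv F p2" and ?y = "q *\<^sub>R bellv F p1 + (1-q) *\<^sub>R bellv F p2"
    let ?V1 = "feas_vals K Xr F (\<lambda>z. z = ?y1)" and ?V2 = "feas_vals K Xr F (\<lambda>z. z = ?y2)"
      and ?V = "feas_vals K Xr F (\<lambda>z. z = ?y)"
    have q01: "0 \<le> q" "q \<le> 1" using q by auto
    have ne1: "?V1 \<noteq> {}" using unif[OF p1] by blast
    have ne2: "?V2 \<noteq> {}" using unif[OF p2] by blast
    have "q * Sup ?V1 + (1-q) * Sup ?V2 \<le> Sup ?V"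
    proof (rule sup_comb[OF q01 ne1 ne2 bdd bdd], intro ballI)
      fix v1 v2 assume "v1 \<in> ?V1" "v2 \<in> ?V2"
      from mix[OF q01 this] show "q * v1 + (1-q) * v2 \<le> Sup ?V" by (rule cSup_upper[OF _ bdd])
    qed
    hence comb: "q * Gfun K Xr F ?y1 + (1-q) * Gfun K Xr F ?y2 \<le> Gfun K Xr F ?y"
      unfolding Gfun_def .
    have g1: "0 < Gfun K Xr F ?y1" using Gprops[OF p1] npos by (auto intro: less_le_trans[of 0 "1/n"])
    have g2: "0 < Gfun K Xr F ?y2" using Gprops[OF p2] npos by (auto intro: less_le_trans[of 0 "1/n"])
    have gpos: "0 < q * Gfun K Xr F ?y1 + (1-q) * Gfun K Xr F ?y2"
      using g1 g2 q01 by (cases "q = 0") (auto intro: add_pos_nonneg)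
    have conc: "q * log 2 (Gfun K Xr F ?y1) + (1-q) * log 2 (Gfun K Xr F ?y2)
        \<le> log 2 (q * Gfun K Xr F ?y1 + (1-q) * Gfun K Xr F ?y2)"
    proof -
      have "concave_on {0<..} (\<lambda>x. log 2 x)" by (rule log_concave) simp
      hence H: "\<forall>x\<in>{0<..}. \<forall>y\<in>{0<..}. \<forall>u\<ge>0. \<forall>v\<ge>0. u + v = 1 \<longrightarrow>
          log 2 (u *\<^sub>R x + v *\<^sub>R y) \<ge> u * log 2 x + v * log 2 y"
        unfolding concave_on_iff by blast
      have "0 \<le> 1 - q" using q01 by simp
      from H[rule_format, OF _ _ q01(1) this] g1 g2
      show ?thesis by simp
    qed
    also have "\<dots> \<le> log 2 (Gfun K Xr F ?y)" using comb gpos by simp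
    finally show "- log 2 (Gfun K Xr F ?y) \<le> q * - log 2 (Gfun K Xr F ?y1) + (1-q) * - log 2 (Gfun K Xr F ?y2)"
      by simp
  qed
  have part2: "ereal (- log 2 (Gbox K Xr F lo hi))
      \<le> (INF y \<in> {bellv F p | p. p \<in> Q} \<inter> {y. \<forall>i. lo i \<le> ereal (y $ i) \<and> ereal (y $ i) \<le> hi i}.
           ereal (- log 2 (Gfun K Xr F y)))" for lo hi :: "'i \<Rightarrow> ereal"
  proof (rule INF_greatest)
    fix y assume y: "y \<in> {bellv F p | p. p \<in> Q} \<inter> {y. \<forall>i. lo i \<le> ereal (y $ i) \<and> ereal (y $ i) \<le> hi i}"
    then obtain p where p: "p \<in> Q" and yp: "y = bellv F p" by blast
    have box: "\<forall>i. lo i \<le> ereal (y $ i) \<and> ereal (y $ i) \<le> hi i" using y by blast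
    let ?B = "\<lambda>z. \<forall>i. lo i \<le> ereal (z $ i) \<and> ereal (z $ i) \<le> hi i"
    have sub: "feas_vals K Xr F (\<lambda>z. z = y) \<subseteq> feas_vals K Xr F ?B"
      unfolding feas_vals_def using box by blast
    have ne: "feas_vals K Xr F (\<lambda>z. z = y) \<noteq> {}" using unif[OF p] yp by blast
    have neB: "feas_vals K Xr F ?B \<noteq> {}" using ne sub by blast
    have GB: "Gbox K Xr F lo hi = Sup (feas_vals K Xr F ?B)"
      unfolding Gbox_def Let_def using neB by simp
    have le: "Gfun K Xr F y \<le> Gbox K Xr F lo hi"
      unfolding GB Gfun_def by (rule cSup_subset_mono[OF ne bdd sub])
    have gp: "0 < Gfun K Xr F y" using Gprops[OF p] npos yp by (auto intro: less_le_trans[of 0 "1/n"])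
    have "log 2 (Gfun K Xr F y) \<le> log 2 (Gbox K Xr F lo hi)"
      using le gp by (subst log_le_cancel_iff) auto
    thus "ereal (- log 2 (Gbox K Xr F lo hi)) \<le> ereal (- log 2 (Gfun K Xr F y))" by simp
  qed
  show ?thesis using part1 part2 by blast
qed

end
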